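(* Let $I$ be a regular ideal of a local ring $R$. Then $I^n$ can be generated by two elements for some integer $n>1$ if and only if $I$ can be generated by two elements and $I^2=aI$ for some $a\in I$.
   Context: All rings are commutative with identity; a local ring is a ring with a unique maximal ideal (not necessarily Noetherian). An ideal is regular if it contains a nonzerodivisor. *)

theory Defs
  imports Main
begin

definition is_ideal :: "'a::comm_ring_1 set \<Rightarrow> bool" where
  "is_ideal I \<longleftrightarrow> 0 \<in> I \<and> (\<forall>x\<in>I. \<forall>y\<in>I. x + y \<in> I) \<and> (\<forall>r. \<forall>x\<in>I. r * x \<in> I)"

definition ideal_generated :: "'a::comm_ring_1 set \<Rightarrow> 'a set" where
  "ideal_generated S = \<Inter>{J. is_ideal J \<and> S \<subseteq> J}"

definition ideal_mult :: "'a::comm_ring_1 set \<Rightarrow> 'a set \<Rightarrow> 'a set" where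
  "ideal_mult I J = ideal_generated {i * j | i j. i \<in> I \<and> j \<in> J}"

fun ideal_pow :: "'a::comm_ring_1 set \<Rightarrow> nat \<Rightarrow> 'a set" where
  "ideal_pow I 0 = UNIV"
| "ideal_pow I (Suc n) = ideal_mult I (ideal_pow I n)"

definition elem_mult :: "'a::comm_ring_1 \<Rightarrow> 'a set \<Rightarrow> 'a set" where
  "elem_mult a I = (\<lambda>x. a * x) ` I"

definition two_generated :: "'a::comm_ring_1 set \<Rightarrow> bool" where
  "two_generated I \<longleftrightarrow> (\<exists>x y. I = ideal_generated {x, y})"

definition nonzerodivisor :: "'a::comm_ring_1 \<Rightarrow> bool" where
  "nonzerodivisor x \<longleftrightarrow> (\<forall>y. x * y = 0 \<longrightarrow> y = 0)"

definition regular_ideal :: "'a::comm_ring_1 set \<Rightarrow> bool" where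
  "regular_ideal I \<longleftrightarrow> is_ideal I \<and> (\<exists>x\<in>I. nonzerodivisor x)"

definition maximal_ideal :: "'a::comm_ring_1 set \<Rightarrow> bool" where
  "maximal_ideal M \<longleftrightarrow> is_ideal M \<and> M \<noteq> UNIV \<and>
     (\<forall>J. is_ideal J \<and> M \<subseteq> J \<longrightarrow> J = M \<or> J = UNIV)"

text \<open>A local ring: exactly one maximal ideal (not necessarily Noetherian).\<close>
definition local_ring :: "'a::comm_ring_1 itself \<Rightarrow> bool" where
  "local_ring _ \<longleftrightarrow> (\<exists>!M::'a set. maximal_ideal M)"

end

theory Submission
  imports Defs
begin

lemma ideal_generated_ideal: "is_ideal (ideal_generated S)"
  unfolding ideal_generated_def is_ideal_def by auto

lemma gen_sub: "S \<subseteq> ideal_generated S"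
  unfolding ideal_generated_def by auto

lemma gen_least: "is_ideal J \<Longrightarrow> S \<subseteq> J \<Longrightarrow> ideal_generated S \<subseteq> J"
  unfolding ideal_generated_def by auto

lemma id0: "is_ideal J \<Longrightarrow> 0 \<in> J" unfolding is_ideal_def by auto
lemma idadd: "is_ideal J \<Longrightarrow> x \<in> J \<Longrightarrow> y \<in> J \<Longrightarrow> x + y \<in> J" unfolding is_ideal_def by auto
lemma idmul: "is_ideal J \<Longrightarrow> x \<in> J \<Longrightarrow> r * x \<in> J" unfolding is_ideal_def by auto
lemma idmul2: "is_ideal J \<Longrightarrow> x \<in> J \<Longrightarrow> x * r \<in> J" using idmul[of J x r] by (simp add: mult.commute)
lemma idneg: "is_ideal J \<Longrightarrow> x \<in> J \<Longrightarrow> - x \<in> J" using idmul[of J x "-1"] by simp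
lemma iddiff: "is_ideal J \<Longrightarrow> x \<in> J \<Longrightarrow> y \<in> J \<Longrightarrow> x - y \<in> J"
  using idadd[of J x "-y"] idneg[of J y] by simp

lemma ideal_mult_ideal: "is_ideal (ideal_mult I J)"
  unfolding ideal_mult_def by (rule ideal_generated_ideal)

lemma pow_ideal: "is_ideal (ideal_pow I n)"
  by (cases n) (simp add: is_ideal_def, simp add: ideal_mult_ideal)

lemma prod_in: "x \<in> I \<Longrightarrow> y \<in> ideal_pow I k \<Longrightarrow> x * y \<in> ideal_pow I (Suc k)"
  by (simp add: ideal_mult_def) (rule subsetD[OF gen_sub], blast)

lemma gen2: "ideal_generated {u, v} = {a * u + b * v | a b. True}"
proof
  have "is_ideal {a * u + b * v | a b. True}"
    unfolding is_ideal_def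
  proof (intro conjI ballI allI)
    show "0 \<in> {a * u + b * v | a b. True}" by (rule CollectI, rule exI[of _ 0], rule exI[of _ 0]) simp
  next
    fix x y assume "x \<in> {a * u + b * v | a b. True}" "y \<in> {a * u + b * v | a b. True}"
    then obtain a b c d where "x = a*u+b*v" "y = c*u+d*v" by auto
    then have "x+y = (a+c)*u+(b+d)*v" by (simp add: algebra_simps)
    then show "x + y \<in> {a * u + b * v | a b. True}" by blast
  next
    fix r x assume "x \<in> {a * u + b * v | a b. True}"
    then obtain a b where "x = a*u+b*v" by auto
    then have "r*x = (r*a)*u+(r*b)*v" by (simp add: algebra_simps)
    then show "r * x \<in> {a * u + b * v | a b. True}" by blast
  qed
  moreover have "u = 1*u + 0*v" "v = 0*u+1*v" by simp_all
  then have "u \<in> {a * u + b * v | a b. True}" "v \<in> {a * u + b * v | a b. True}" by blast+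
  ultimately show "ideal_generated {u, v} \<subseteq> {a * u + b * v | a b. True}"
    by (intro gen_least) auto
next
  have "u \<in> ideal_generated {u,v}" "v \<in> ideal_generated {u,v}" using gen_sub[of "{u,v}"] by auto
  then show "{a * u + b * v | a b. True} \<subseteq> ideal_generated {u, v}"
    using ideal_generated_ideal[of "{u,v}"] by (auto intro!: idadd idmul)
qed

lemma emult_ideal: "is_ideal J \<Longrightarrow> is_ideal (elem_mult x J)"
proof -
  assume J: "is_ideal J"
  show ?thesis unfolding is_ideal_def elem_mult_def
  proof (intro conjI ballI allI)
    show "0 \<in> (*) x ` J" using id0[OF J] by (rule image_eqI[rotated]) simp
  next
    fix a b assume "a \<in> (*) x ` J" "b \<in> (*) x ` J"
    then obtain c d where "c \<in> J" "d \<in> J" "a = x * c" "b = x * d" by auto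
    then show "a + b \<in> (*) x ` J" using idadd[OF J] by (intro image_eqI[of _ _ "c + d"]) (simp_all add: distrib_left)
  next
    fix r a assume "a \<in> (*) x ` J"
    then obtain c where "c \<in> J" "a = x * c" by auto
    then show "r * a \<in> (*) x ` J" using idmul[OF J] by (intro image_eqI[of _ _ "r * c"]) (simp_all add: mult.left_commute)
  qed
qed

lemma pow1: "is_ideal I \<Longrightarrow> ideal_pow I 1 = I"
proof -
  assume I: "is_ideal I"
  have "ideal_pow I 1 = ideal_generated {i * j |i j. i \<in> I \<and> j \<in> UNIV}"
    by (simp add: ideal_mult_def)
  also have "\<dots> = I"
  proof
    show "ideal_generated {i * j |i j. i \<in> I \<and> j \<in> UNIV} \<subseteq> I"
      using I by (intro gen_least) (auto intro: idmul2)
    show "I \<subseteq> ideal_generated {i * j |i j. i \<in> I \<and> j \<in> UNIV}"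
    proof
      fix i assume "i \<in> I"
      then have "i * 1 \<in> {i * j |i j. i \<in> I \<and> j \<in> UNIV}" by blast
      then show "i \<in> ideal_generated {i * j |i j. i \<in> I \<and> j \<in> UNIV}"
        using gen_sub[of "{i * j |i j. i \<in> I \<and> j \<in> UNIV}"] by auto
    qed
  qed
  finally show ?thesis .
qed

declare ideal_pow.simps(2)[simp del]

lemma exists_maximal:
  fixes x :: "'a::comm_ring_1"
  assumes "\<not> x dvd 1"
  shows "\<exists>M. maximal_ideal M \<and> x \<in> M"
proof -
  define A where "A = {J::'a set. is_ideal J \<and> x \<in> J \<and> 1 \<notin> J}"
  have xi: "is_ideal (elem_mult x UNIV)"
    by (rule emult_ideal) (simp add: is_ideal_def)
  have "x \<in> elem_mult x UNIV" unfolding elem_mult_def by (rule image_eqI[of _ _ 1]) simp_all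
  moreover have "1 \<notin> elem_mult x UNIV" using assms unfolding elem_mult_def dvd_def by auto
  ultimately have "elem_mult x UNIV \<in> A" unfolding A_def using xi by blast
  then have "A \<noteq> {}" by auto
  moreover have "\<Union>C \<in> A" if ne: "C \<noteq> {}" and sc: "subset.chain A C" for C
  proof -
    have CA: "C \<subseteq> A" and ch: "\<forall>X\<in>C. \<forall>Y\<in>C. X \<subseteq> Y \<or> Y \<subseteq> X"
      using sc by (auto simp: subset_chain_def)
    have "is_ideal (\<Union>C)"
      unfolding is_ideal_def
    proof (intro conjI ballI allI)
      obtain J where "J \<in> C" using ne by auto
      then show "0 \<in> \<Union>C" using CA by (auto simp: A_def is_ideal_def)
    next
      fix a b assume "a \<in> \<Union>C" "b \<in> \<Union>C"
      then obtain J1 J2 where "J1 \<in> C" "J2 \<in> C" "a \<in> J1" "b \<in> J2" by auto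
      then have "is_ideal J1" "is_ideal J2" "J1 \<subseteq> J2 \<or> J2 \<subseteq> J1" using ch CA unfolding A_def by auto
      then have "a + b \<in> J1 \<or> a + b \<in> J2" using \<open>a \<in> J1\<close> \<open>b \<in> J2\<close> idadd by blast
      then show "a + b \<in> \<Union>C" using \<open>J1 \<in> C\<close> \<open>J2 \<in> C\<close> by blast
    next
      fix r a assume "a \<in> \<Union>C"
      then obtain J where "J \<in> C" "a \<in> J" by auto
      then show "r * a \<in> \<Union>C" using CA unfolding A_def by (auto intro: idmul)
    qed
    moreover have "x \<in> \<Union>C" "1 \<notin> \<Union>C" using CA ne unfolding A_def by auto
    ultimately show ?thesis unfolding A_def by auto
  qed
  ultimately obtain M where M: "M \<in> A" "\<forall>X\<in>A. M \<subseteq> X \<longrightarrow> X = M"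
    using subset_Zorn_nonempty[of A] by blast
  have "maximal_ideal M"
    unfolding maximal_ideal_def
  proof (intro conjI allI impI)
    show "is_ideal M" using M unfolding A_def by auto
    show "M \<noteq> UNIV" using M unfolding A_def by auto
    fix J assume J: "is_ideal J \<and> M \<subseteq> J"
    show "J = M \<or> J = UNIV"
    proof (cases "1 \<in> J")
      case True
      then have "J = UNIV" using J idmul[of J 1] by auto
      then show ?thesis by simp
    next
      case False
      then have "J \<in> A" using J M unfolding A_def by auto
      then show ?thesis using M J by auto
    qed
  qed
  then show ?thesis using M unfolding A_def by auto
qed

lemma local_nonunits:
  assumes "local_ring TYPE('a::comm_ring_1)"
  shows "is_ideal {x::'a. \<not> x dvd 1}"
proof -
  obtain M :: "'a set" where M: "maximal_ideal M" and uniq: "\<And>N. maximal_ideal N \<Longrightarrow> N = M"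
    using assms unfolding local_ring_def by auto
  have "{x::'a. \<not> x dvd 1} = M"
  proof
    show "{x::'a. \<not> x dvd 1} \<subseteq> M" using exists_maximal uniq by blast
    show "M \<subseteq> {x::'a. \<not> x dvd 1}"
    proof
      fix y assume "y \<in> M"
      show "y \<in> {x. \<not> x dvd 1}"
      proof (rule CollectI, rule notI)
        assume "y dvd 1"
        then obtain z where "1 = y * z" by (auto simp: dvd_def)
        then have "1 \<in> M" using \<open>y \<in> M\<close> M idmul2 unfolding maximal_ideal_def by metis
        then have "M = UNIV" using M idmul[of M 1] unfolding maximal_ideal_def by auto
        then show False using M unfolding maximal_ideal_def by auto
      qed
    qed
  qed
  then show ?thesis using M unfolding maximal_ideal_def by auto
qed


lemma in_N_cong: "is_ideal N \<Longrightarrow> x - y \<in> N \<Longrightarrow> y \<in> N \<Longrightarrow> x \<in> N"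
  using idadd[of N "x-y" y] by simp

lemma cong4:
  assumes N: "is_ideal N" and "a - a' \<in> N" "b - b' \<in> N" "c - c' \<in> N" "d - d' \<in> N"
  shows "(a*b - c*d) - (a'*b' - c'*d') \<in> N"
proof -
  have "(a*b - c*d) - (a'*b' - c'*d') = (a*(b-b') + (a-a')*b') - (c*(d-d') + (c-c')*d')"
    by (simp add: algebra_simps)
  also have "\<dots> \<in> N"
    by (rule iddiff[OF N idadd[OF N idmul[OF N assms(3)] idmul2[OF N assms(2)]]
                     idadd[OF N idmul[OF N assms(5)] idmul2[OF N assms(4)]]])
  finally show ?thesis .
qed

lemma nonunit_cancel: "(x::'a::comm_ring_1) * y \<in> {z. \<not> z dvd 1} \<Longrightarrow> y \<notin> {z. \<not> z dvd 1} \<Longrightarrow> x \<in> {z. \<not> z dvd 1}"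
  using mult_dvd_mono[of x 1 y 1] by auto

lemma vanish:
  assumes N: "is_ideal {z::'a::comm_ring_1. \<not> z dvd 1}"
    and D: "sA * tB - sB * tA \<notin> {z::'a. \<not> z dvd 1}"
    and h1: "sA * pB - sB * pA \<in> {z. \<not> z dvd 1}" and h2: "tA * pB - tB * pA \<in> {z. \<not> z dvd 1}"
  shows "pA \<in> {z. \<not> z dvd 1} \<and> pB \<in> {z. \<not> z dvd 1}"
proof
  have "pA * (sA * tB - sB * tA) = tA * (sA * pB - sB * pA) - sA * (tA * pB - tB * pA)"
    by (simp add: algebra_simps)
  also have "\<dots> \<in> {z. \<not> z dvd 1}" by (rule iddiff[OF N idmul[OF N h1] idmul[OF N h2]])
  finally show "pA \<in> {z. \<not> z dvd 1}" using D by (rule nonunit_cancel)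
  have "pB * (sA * tB - sB * tA) = tB * (sA * pB - sB * pA) - sB * (tA * pB - tB * pA)"
    by (simp add: algebra_simps)
  also have "\<dots> \<in> {z. \<not> z dvd 1}" by (rule iddiff[OF N idmul[OF N h1] idmul[OF N h2]])
  finally show "pB \<in> {z. \<not> z dvd 1}" using D by (rule nonunit_cancel)
qed

locale twogen =
  fixes I :: "'a::comm_ring_1 set" and k :: nat and u v :: 'a
  assumes I: "is_ideal I" and NI: "is_ideal {x::'a. \<not> x dvd 1}"
    and gen: "ideal_pow I (Suc (Suc k)) = ideal_generated {u,v}"
    and NP: "\<forall>a b. a*u + b*v = 0 \<longrightarrow> \<not> a dvd 1 \<and> \<not> b dvd 1"
begin

abbreviation "NN \<equiv> {x::'a. \<not> x dvd 1}"
abbreviation "P \<equiv> ideal_pow I (Suc (Suc k))"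
abbreviation "Q \<equiv> ideal_pow I (Suc k)"

definition ca :: "'a \<Rightarrow> 'a" where "ca z = fst (SOME p. z = fst p * u + snd p * v)"
definition cb :: "'a \<Rightarrow> 'a" where "cb z = snd (SOME p. z = fst p * u + snd p * v)"
definition dt :: "'a \<Rightarrow> 'a \<Rightarrow> 'a" where "dt z w = ca z * cb w - cb z * ca w"

lemma Pchar: "z \<in> P \<longleftrightarrow> (\<exists>a b. z = a*u + b*v)"
  by (subst gen) (simp add: gen2)

lemma rep: "z \<in> P \<Longrightarrow> z = ca z * u + cb z * v"
proof -
  assume "z \<in> P"
  then obtain a b where "z = a*u + b*v" using Pchar by auto
  then have "\<exists>p. z = fst p * u + snd p * v" by (intro exI[of _ "(a,b)"]) simp
  from someI_ex[OF this] show ?thesis unfolding ca_def cb_def by simp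
qed

lemma uniq: "z = a*u + b*v \<Longrightarrow> a - ca z \<in> NN \<and> b - cb z \<in> NN"
proof -
  assume z: "z = a*u + b*v"
  then have "z \<in> P" using Pchar by auto
  from rep[OF this] z have "(a - ca z) * u + (b - cb z) * v = 0" by (simp add: algebra_simps)
  then show ?thesis using NP by blast
qed

lemma NN1: "1 \<notin> NN" by simp

lemma Pideal: "is_ideal P" by (rule pow_ideal)

lemma K1:
  assumes x: "x \<in> I" and Y: "Y \<in> Q" and Z: "Z \<in> Q" and D: "dt (x*Y) (x*Z) \<notin> NN"
  shows "P = elem_mult x Q"
proof
  show "elem_mult x Q \<subseteq> P"
  proof
    fix z assume "z \<in> elem_mult x Q"
    then obtain y where "y \<in> Q" "z = x*y" unfolding elem_mult_def by auto
    then show "z \<in> P" using prod_in[OF x] by blast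
  qed
next
  define p where "p = x*Y"
  define q where "q = x*Z"
  have pP: "p \<in> P" "q \<in> P" unfolding p_def q_def using prod_in[OF x Y] prod_in[OF x Z] by auto
  define a1 where "a1 = ca p"
  define b1 where "b1 = cb p"
  define a2 where "a2 = ca q"
  define b2 where "b2 = cb q"
  have p: "p = a1*u + b1*v" and q: "q = a2*u+b2*v" using rep pP unfolding a1_def b1_def a2_def b2_def by auto
  have "a1 * b2 - b1 * a2 dvd 1" using D unfolding dt_def p_def q_def a1_def b1_def a2_def b2_def by auto
  then obtain e where e: "1 = (a1 * b2 - b1 * a2) * e" by (auto simp: dvd_def)
  have "u = (a1 * b2 - b1 * a2) * e * u" using e by simp
  also have "\<dots> = e * (b2 * p - b1 * q)" unfolding p q by (simp add: algebra_simps)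
  also have "\<dots> = x * (e * (b2 * Y - b1 * Z))" unfolding p_def q_def by (simp add: algebra_simps)
  finally have u: "u \<in> elem_mult x Q" unfolding elem_mult_def
    using idmul[OF pow_ideal iddiff[OF pow_ideal idmul[OF pow_ideal Y] idmul[OF pow_ideal Z]]] by blast
  have "v = (a1 * b2 - b1 * a2) * e * v" using e by simp
  also have "\<dots> = e * (a1 * q - a2 * p)" unfolding p q by (simp add: algebra_simps)
  also have "\<dots> = x * (e * (a1 * Z - a2 * Y))" unfolding p_def q_def by (simp add: algebra_simps)
  finally have v: "v \<in> elem_mult x Q" unfolding elem_mult_def
    using idmul[OF pow_ideal iddiff[OF pow_ideal idmul[OF pow_ideal Z] idmul[OF pow_ideal Y]]] by blast
  show "P \<subseteq> elem_mult x Q" unfolding gen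
    using u v by (intro gen_least emult_ideal pow_ideal) auto
qed

lemma flip: "x - y \<in> NN \<Longrightarrow> y - x \<in> NN"
  using idneg[OF NI, of "x - y"] by simp

lemma Nc: "x - y \<in> NN \<Longrightarrow> y \<in> NN \<Longrightarrow> x \<in> NN"
  by (rule in_N_cong[OF NI])

lemma csum: assumes "z \<in> P" "w \<in> P"
  shows "ca (z+w) - (ca z + ca w) \<in> NN \<and> cb (z+w) - (cb z + cb w) \<in> NN"
proof -
  have "z + w = (ca z + ca w) * u + (cb z + cb w) * v"
    using rep[OF assms(1)] rep[OF assms(2)] by (simp add: algebra_simps)
  from uniq[OF this] show ?thesis using flip by blast
qed

lemma cmul: assumes "z \<in> P"
  shows "ca (r*z) - r * ca z \<in> NN \<and> cb (r*z) - r * cb z \<in> NN"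
proof -
  from rep[OF assms(1)] have "r * z = r * (ca z * u + cb z * v)" by (rule arg_cong)
  also have "\<dots> = (r * ca z) * u + (r * cb z) * v" by (simp add: algebra_simps)
  finally have "r * z = (r * ca z) * u + (r * cb z) * v" .
  from uniq[OF this] show ?thesis using flip by blast
qed

lemma c0: "ca 0 \<in> NN \<and> cb 0 \<in> NN"
proof -
  have "(0::'a) = 0 * u + 0 * v" by simp
  from uniq[OF this] have "0 - ca 0 \<in> NN" "0 - cb 0 \<in> NN" by auto
  then show ?thesis using flip by fastforce
qed

lemma cu: "ca u - 1 \<in> NN \<and> cb u \<in> NN"
proof -
  have "u = 1 * u + 0 * v" by simp
  from uniq[OF this] have "1 - ca u \<in> NN" "0 - cb u \<in> NN" by auto
  then show ?thesis using flip by fastforce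
qed

lemma cv: "ca v \<in> NN \<and> cb v - 1 \<in> NN"
proof -
  have "v = 0 * u + 1 * v" by simp
  from uniq[OF this] have "0 - ca v \<in> NN" "1 - cb v \<in> NN" by auto
  then show ?thesis using flip by fastforce
qed

lemma uP: "u \<in> P" and vP: "v \<in> P"
  using gen gen_sub[of "{u,v}"] by auto

abbreviation "G \<equiv> {a*(b*B') | a b B'. a\<in>I \<and> b\<in>I \<and> B' \<in> ideal_pow I k}"

lemma PG: "P \<subseteq> ideal_generated G"
proof -
  have P: "P = ideal_generated {i*j | i j. i\<in>I \<and> j\<in>Q}"
    by (simp add: ideal_pow.simps(2) ideal_mult_def)
  have "i * j \<in> ideal_generated G" if i: "i \<in> I" and j: "j \<in> Q" for i j
  proof -
    define T where "T = {j. i*j \<in> ideal_generated G}"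
    have "is_ideal T" unfolding T_def is_ideal_def
      using ideal_generated_ideal[of G]
      by (auto simp: distrib_left mult.left_commute intro: id0 idadd idmul)
    moreover have "{i'*j' | i' j'. i'\<in>I \<and> j'\<in>ideal_pow I k} \<subseteq> T"
      unfolding T_def using i gen_sub[of G] by blast
    ultimately have "ideal_generated {i'*j' | i' j'. i'\<in>I \<and> j'\<in>ideal_pow I k} \<subseteq> T"
      by (rule gen_least)
    moreover have "Q = ideal_generated {i'*j' | i' j'. i'\<in>I \<and> j'\<in>ideal_pow I k}"
      by (simp add: ideal_pow.simps(2) ideal_mult_def)
    ultimately show ?thesis using j unfolding T_def by auto
  qed
  then show ?thesis unfolding P by (intro gen_least ideal_generated_ideal) blast
qed

lemma GP: "G \<subseteq> P"
  using prod_in by blast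

lemma Gtrick: "is_ideal J \<Longrightarrow> G \<subseteq> J \<Longrightarrow> P \<subseteq> J"
  using PG gen_least by blast

lemma ex_s: "\<exists>s\<in>G. ca s \<notin> NN"
proof (rule ccontr)
  assume H: "\<not> (\<exists>s\<in>G. ca s \<notin> NN)"
  define J where "J = {z\<in>P. ca z \<in> NN}"
  have "is_ideal J" unfolding is_ideal_def J_def
  proof (intro conjI ballI allI)
    show "0 \<in> {z \<in> P. ca z \<in> NN}" using c0 id0[OF Pideal] by auto
  next
    fix x y assume "x \<in> {z \<in> P. ca z \<in> NN}" "y \<in> {z \<in> P. ca z \<in> NN}"
    then show "x + y \<in> {z \<in> P. ca z \<in> NN}"
      using csum[of x y] idadd[OF Pideal] idadd[OF NI] Nc by blast
  next
    fix r x assume "x \<in> {z \<in> P. ca z \<in> NN}"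
    then show "r * x \<in> {z \<in> P. ca z \<in> NN}"
      using cmul[of x r] idmul[OF Pideal] idmul[OF NI] Nc by blast
  qed
  moreover have "G \<subseteq> J"
  proof
    fix z assume "z \<in> G" then show "z \<in> J" using H subsetD[OF GP] unfolding J_def by blast
  qed
  ultimately have "u \<in> J" using Gtrick uP by blast
  then have "ca u \<in> NN" unfolding J_def by auto
  then have "1 \<in> NN" using cu flip Nc by blast
  then show False by simp
qed

lemma ex_t: assumes sP: "s \<in> P" and cs: "ca s \<notin> NN" shows "\<exists>t\<in>G. dt s t \<notin> NN"
proof (rule ccontr)
  assume H: "\<not> (\<exists>t\<in>G. dt s t \<notin> NN)"
  define J where "J = {z\<in>P. dt s z \<in> NN}"
  have "is_ideal J" unfolding is_ideal_def J_def
  proof (intro conjI ballI allI)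
    have "dt s 0 - (ca s * 0 - cb s * 0) \<in> NN" unfolding dt_def
      using c0 flip by (intro cong4[OF NI]) auto
    then show "0 \<in> {z \<in> P. dt s z \<in> NN}" using id0[OF Pideal] by simp
  next
    fix x y assume xy: "x \<in> {z \<in> P. dt s z \<in> NN}" "y \<in> {z \<in> P. dt s z \<in> NN}"
    have "dt s (x+y) - (ca s * (cb x + cb y) - cb s * (ca x + ca y)) \<in> NN" unfolding dt_def
      using csum[of x y] xy by (intro cong4[OF NI]) auto
    moreover have "ca s * (cb x + cb y) - cb s * (ca x + ca y) = dt s x + dt s y"
      unfolding dt_def by (simp add: algebra_simps)
    ultimately show "x + y \<in> {z \<in> P. dt s z \<in> NN}"
      using xy idadd[OF Pideal] idadd[OF NI] Nc by auto
  next
    fix r x assume x: "x \<in> {z \<in> P. dt s z \<in> NN}"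
    have "dt s (r*x) - (ca s * (r * cb x) - cb s * (r * ca x)) \<in> NN" unfolding dt_def
      using cmul[of x r] x by (intro cong4[OF NI]) auto
    moreover have "ca s * (r * cb x) - cb s * (r * ca x) = r * dt s x"
      unfolding dt_def by (simp add: algebra_simps)
    ultimately show "r * x \<in> {z \<in> P. dt s z \<in> NN}"
      using x idmul[OF Pideal] idmul[OF NI] Nc by auto
  qed
  moreover have "G \<subseteq> J"
  proof
    fix z assume "z \<in> G" then show "z \<in> J" using H subsetD[OF GP] unfolding J_def by blast
  qed
  ultimately have "v \<in> J" using Gtrick vP by blast
  then have "dt s v \<in> NN" unfolding J_def by auto
  moreover have "dt s v - (ca s * 1 - cb s * 0) \<in> NN" unfolding dt_def
    using cv by (intro cong4[OF NI]) auto
  ultimately have "ca s \<in> NN" using flip[of "dt s v" "ca s"] Nc[of "ca s" "dt s v"] by simp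
  then show False using cs by simp
qed

lemma mainNP: "\<exists>x\<in>I. P = elem_mult x Q"
proof (rule ccontr)
  assume H: "\<not> (\<exists>x\<in>I. P = elem_mult x Q)"
  have K: "dt (x*Y) (x*Z) \<in> NN" if "x \<in> I" "Y \<in> Q" "Z \<in> Q" for x Y Z
    using K1[OF that] H that by blast
  obtain s where sG: "s \<in> G" and cs: "ca s \<notin> NN" using ex_s by blast
  obtain t where tG: "t \<in> G" and dts: "dt s t \<notin> NN" using ex_t[OF subsetD[OF GP sG] cs] by blast
  obtain a b B' where s: "s = a*(b*B')" and a: "a \<in> I" and b: "b \<in> I" and B': "B' \<in> ideal_pow I k"
    using sG by blast
  obtain c e E' where t: "t = c*(e*E')" and c: "c \<in> I" and e: "e \<in> I" and E': "E' \<in> ideal_pow I k"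
    using tG by blast
  define B where "B = b*B'"
  define E where "E = e*E'"
  have BQ: "B \<in> Q" and EQ: "E \<in> Q" unfolding B_def E_def using prod_in b B' e E' by auto
  have aBQ: "a*B' \<in> Q" "c*B' \<in> Q" "a*E' \<in> Q" "c*E' \<in> Q" using prod_in a c B' E' by auto
  have inP: "a*B \<in> P" "a*E \<in> P" "c*B \<in> P" "c*E \<in> P"
    using prod_in a c BQ EQ by auto
  have h1: "dt (a*B) (a*E) \<in> NN" using K a BQ EQ by blast
  have h2: "dt (c*E) (c*B) \<in> NN" using K c BQ EQ by blast
  have "dt (b*(a*B')) (b*(c*B')) \<in> NN" using K b aBQ by blast
  then have h3: "dt (a*B) (c*B) \<in> NN" unfolding B_def by (simp add: mult.left_commute)
  have "dt (e*(c*E')) (e*(a*E')) \<in> NN" using K e aBQ by blast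
  then have h4: "dt (c*E) (a*E) \<in> NN" unfolding E_def by (simp add: mult.left_commute)
  have ac: "a + c \<in> I" using a c I idadd by blast
  have h5: "dt ((a+c)*B) ((a+c)*E) \<in> NN" using K ac BQ EQ by blast
  have D0: "dt (a*B) (c*E) \<notin> NN" using dts s t unfolding B_def E_def by simp
  have P0: "ca (a*E) \<in> NN \<and> cb (a*E) \<in> NN"
    by (rule vanish[where sA="ca (a*B)" and sB="cb (a*B)" and tA="ca (c*E)" and tB="cb (c*E)", OF NI])
      (use D0 h1 h4 in \<open>simp_all add: dt_def\<close>)
  have Q0: "ca (c*B) \<in> NN \<and> cb (c*B) \<in> NN"
    by (rule vanish[where sA="ca (a*B)" and sB="cb (a*B)" and tA="ca (c*E)" and tB="cb (c*E)", OF NI])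
      (use D0 h3 h2 in \<open>simp_all add: dt_def\<close>)
  have sB: "ca ((a+c)*B) - ca (a*B) \<in> NN \<and> cb ((a+c)*B) - cb (a*B) \<in> NN"
  proof -
    have "(a+c)*B = a*B + c*B" by (simp add: algebra_simps)
    then have "ca ((a+c)*B) - (ca (a*B) + ca (c*B)) \<in> NN \<and> cb ((a+c)*B) - (cb (a*B) + cb (c*B)) \<in> NN"
      using csum[OF inP(1) inP(3)] by simp
    moreover have "ca ((a+c)*B) - ca (a*B) = (ca ((a+c)*B) - (ca (a*B) + ca (c*B))) + ca (c*B)"
      "cb ((a+c)*B) - cb (a*B) = (cb ((a+c)*B) - (cb (a*B) + cb (c*B))) + cb (c*B)"
      by (simp_all add: algebra_simps)
    ultimately show ?thesis using Q0 idadd[OF NI] by metis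
  qed
  have sE: "ca ((a+c)*E) - ca (c*E) \<in> NN \<and> cb ((a+c)*E) - cb (c*E) \<in> NN"
  proof -
    have "(a+c)*E = a*E + c*E" by (simp add: algebra_simps)
    then have "ca ((a+c)*E) - (ca (a*E) + ca (c*E)) \<in> NN \<and> cb ((a+c)*E) - (cb (a*E) + cb (c*E)) \<in> NN"
      using csum[OF inP(2) inP(4)] by simp
    moreover have "ca ((a+c)*E) - ca (c*E) = (ca ((a+c)*E) - (ca (a*E) + ca (c*E))) + ca (a*E)"
      "cb ((a+c)*E) - cb (c*E) = (cb ((a+c)*E) - (cb (a*E) + cb (c*E))) + cb (a*E)"
      by (simp_all add: algebra_simps)
    ultimately show ?thesis using P0 idadd[OF NI] by metis
  qed
  have "dt ((a+c)*B) ((a+c)*E) - dt (a*B) (c*E) \<in> NN"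
    unfolding dt_def using sB sE by (intro cong4[OF NI]) auto
  then have "dt (a*B) (c*E) \<in> NN" using h5 flip Nc by blast
  then show False using D0 by simp
qed

end

lemma principal:
  fixes I :: "'a::comm_ring_1 set"
  assumes I: "is_ideal I" and NI: "is_ideal {x::'a. \<not> x dvd 1}"
    and Pw: "ideal_pow I (Suc (Suc k)) = {g * w | g. True}"
    and ne: "ideal_pow I (Suc (Suc k)) \<noteq> {0}"
  shows "\<exists>x\<in>I. ideal_pow I (Suc (Suc k)) = elem_mult x (ideal_pow I (Suc k))"
proof -
  let ?P = "ideal_pow I (Suc (Suc k))" and ?Q = "ideal_pow I (Suc k)"
  let ?NN = "{x::'a. \<not> x dvd 1}"
  have Pgen: "?P = ideal_generated {i*j | i j. i\<in>I \<and> j\<in>?Q}"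
    by (simp add: ideal_pow.simps(2) ideal_mult_def)
  have "\<exists>i j g. i \<in> I \<and> j \<in> ?Q \<and> i*j = g*w \<and> g dvd 1"
  proof (rule ccontr)
    assume H: "\<not> ?thesis"
    define J where "J = {g * w | g. \<not> g dvd 1}"
    have JI: "is_ideal J" unfolding is_ideal_def J_def
    proof (intro conjI ballI allI)
      have "(0::'a) = 0 * w" "\<not> (0::'a) dvd 1" by simp_all
      then show "0 \<in> {g * w | g. \<not> g dvd 1}" by blast
    next
      fix x y assume "x \<in> {g * w | g. \<not> g dvd 1}" "y \<in> {g * w | g. \<not> g dvd 1}"
      then obtain g h where "x = g*w" "y = h*w" "g \<in> ?NN" "h \<in> ?NN" by auto
      then have "x + y = (g+h)*w" "g + h \<in> ?NN" using idadd[OF NI] by (auto simp: algebra_simps)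
      then show "x + y \<in> {g * w | g. \<not> g dvd 1}" by blast
    next
      fix r x assume "x \<in> {g * w | g. \<not> g dvd 1}"
      then obtain g where "x = g*w" "g \<in> ?NN" by auto
      then have "r * x = (r*g)*w" "r*g \<in> ?NN" using idmul[OF NI] by (auto simp: algebra_simps)
      then show "r * x \<in> {g * w | g. \<not> g dvd 1}" by blast
    qed
    have "{i*j | i j. i\<in>I \<and> j\<in>?Q} \<subseteq> J"
    proof
      fix z assume "z \<in> {i*j | i j. i\<in>I \<and> j\<in>?Q}"
      then obtain i j where ij: "z = i*j" "i \<in> I" "j \<in> ?Q" by auto
      then have "z \<in> ?P" using prod_in by blast
      then obtain g where zg: "z = g * w" using Pw by auto
      have "\<not> g dvd 1"
      proof
        assume "g dvd 1"
        then have "i \<in> I \<and> j \<in> ?Q \<and> i*j = g*w \<and> g dvd 1" using ij zg by simp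
        then show False using H by blast
      qed
      then show "z \<in> J" using zg unfolding J_def by blast
    qed
    then have "?P \<subseteq> J" unfolding Pgen using JI by (rule gen_least[rotated])
    moreover have "w \<in> ?P" using Pw by (auto intro: exI[of _ 1])
    ultimately obtain g where g: "w = g * w" "\<not> g dvd 1" unfolding J_def by auto
    have "(1 - g) * w = 0" using g by (simp add: algebra_simps)
    moreover have "1 - g dvd 1"
    proof (rule ccontr)
      assume "\<not> 1 - g dvd 1"
      then have "(1 - g) + g \<in> ?NN" using g idadd[OF NI] by blast
      then show False by simp
    qed
    ultimately have "w = 0"
    proof -
      assume z: "(1 - g) * w = 0" and "1 - g dvd 1"
      then obtain e' where "1 = (1 - g) * e'" by (auto simp: dvd_def)
      then have "w = e' * ((1 - g) * w)" by (metis mult.commute mult.left_commute mult_1)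
      then show "w = 0" using z by simp
    qed
    then have "?P = {0}" using Pw by auto
    then show False using ne by simp
  qed
  then obtain i j g where ij: "i \<in> I" "j \<in> ?Q" "i*j = g*w" "g dvd 1" by blast
  then obtain e where e: "1 = g * e" by (auto simp: dvd_def)
  have w: "w = i * (e * j)" using ij(3) e by (metis mult.assoc mult.commute mult_1)
  have "?P = elem_mult i ?Q"
  proof
    show "?P \<subseteq> elem_mult i ?Q"
    proof
      fix z assume "z \<in> ?P"
      then obtain d where "z = d * w" using Pw by auto
      then have "z = i * (d * (e * j))" using w by (simp add: algebra_simps)
      moreover have "d * (e * j) \<in> ?Q" using ij(2) pow_ideal idmul by metis
      ultimately show "z \<in> elem_mult i ?Q" unfolding elem_mult_def by blast
    qed
    show "elem_mult i ?Q \<subseteq> ?P" unfolding elem_mult_def using prod_in[OF ij(1)] by blast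
  qed
  then show ?thesis using ij(1) by blast
qed

lemma Lmain:
  fixes I :: "'a::comm_ring_1 set"
  assumes loc: "local_ring TYPE('a)" and I: "is_ideal I"
    and gen: "ideal_pow I (Suc (Suc k)) = ideal_generated {u,v}"
    and ne: "ideal_pow I (Suc (Suc k)) \<noteq> {0}"
  shows "\<exists>x\<in>I. ideal_pow I (Suc (Suc k)) = elem_mult x (ideal_pow I (Suc k))"
proof -
  have NI: "is_ideal {x::'a. \<not> x dvd 1}" by (rule local_nonunits[OF loc])
  show ?thesis
  proof (cases "\<forall>a b. a*u + b*v = 0 \<longrightarrow> \<not> a dvd 1 \<and> \<not> b dvd 1")
    case True
    interpret twogen I k u v using I NI gen True by unfold_locales auto
    show ?thesis by (rule mainNP)
  next
    case False
    then obtain a b where ab: "a*u + b*v = 0" "a dvd 1 \<or> b dvd 1" by blast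
    show ?thesis
    proof (cases "a dvd 1")
      case True
      then obtain a' where a': "1 = a * a'" by (auto simp: dvd_def)
      have u: "u = (- (a' * b)) * v"
      proof -
        have "u = a' * (a * u)" using a' by (simp add: mult.assoc[symmetric] mult.commute)
        also have "a * u = - (b * v)" using ab(1) by (simp add: eq_neg_iff_add_eq_0)
        finally show ?thesis by simp
      qed
      have "ideal_pow I (Suc (Suc k)) = {g * v | g. True}"
        unfolding gen gen2
      proof (intro set_eqI iffI)
        fix z assume "z \<in> {a * u + b * v |a b. True}"
        then obtain p q where "z = p * u + q * v" by auto
        then have "z = (p * (- (a' * b)) + q) * v" using u by (simp add: algebra_simps)
        then show "z \<in> {g * v | g. True}" by blast
      next
        fix z assume "z \<in> {g * v | g. True}"
        then obtain g where "z = 0 * u + g * v" by auto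
        then show "z \<in> {a * u + b * v |a b. True}" by blast
      qed
      then show ?thesis using principal[OF I NI _ ne] by blast
    next
      case False
      then have "b dvd 1" using ab by blast
      then obtain b' where b': "1 = b * b'" by (auto simp: dvd_def)
      have v: "v = (- (b' * a)) * u"
      proof -
        have "v = b' * (b * v)" using b' by (simp add: mult.assoc[symmetric] mult.commute)
        also have "b * v = - (a * u)" using ab(1) by (simp add: eq_neg_iff_add_eq_0 add.commute)
        finally show ?thesis by simp
      qed
      have "ideal_pow I (Suc (Suc k)) = {g * u | g. True}"
        unfolding gen gen2
      proof (intro set_eqI iffI)
        fix z assume "z \<in> {a * u + b * v |a b. True}"
        then obtain p q where "z = p * u + q * v" by auto
        then have "z = (q * (- (b' * a)) + p) * u" using v by (simp add: algebra_simps)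
        then show "z \<in> {g * u | g. True}" by blast
      next
        fix z assume "z \<in> {g * u | g. True}"
        then obtain g where "z = g * u + 0 * v" by auto
        then show "z \<in> {a * u + b * v |a b. True}" by blast
      qed
      then show ?thesis using principal[OF I NI _ ne] by blast
    qed
  qed
qed

lemma nzd_pow: "nonzerodivisor (r::'a::comm_ring_1) \<Longrightarrow> nonzerodivisor (r ^ m)"
proof (induction m)
  case 0
  then show ?case unfolding nonzerodivisor_def by simp
next
  case (Suc m)
  show ?case unfolding nonzerodivisor_def
  proof (intro allI impI)
    fix y assume "r ^ Suc m * y = 0"
    then have "r * (r ^ m * y) = 0" by (simp add: mult.assoc)
    then have "r ^ m * y = 0" using Suc.prems unfolding nonzerodivisor_def by blast
    then show "y = 0" using Suc.IH[OF Suc.prems] unfolding nonzerodivisor_def by blast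
  qed
qed

lemma nzd_ne0: "nonzerodivisor (r::'a::comm_ring_1) \<Longrightarrow> r \<noteq> 0"
proof
  assume "nonzerodivisor r" "r = 0"
  then have "r * 1 = 0 \<longrightarrow> (1::'a) = 0" unfolding nonzerodivisor_def by blast
  then show False using \<open>r = 0\<close> by simp
qed

lemma nzd_factor: "nonzerodivisor ((x::'a::comm_ring_1) * y) \<Longrightarrow> nonzerodivisor x"
  unfolding nonzerodivisor_def
proof (intro allI impI)
  fix z assume H: "\<forall>z. x * y * z = 0 \<longrightarrow> z = 0" and "x * z = 0"
  moreover have "x * y * z = y * (x * z)" by (simp add: algebra_simps)
  ultimately have "x * y * z = 0" by simp
  then show "z = 0" using H by blast
qed

lemma pow_mem: "r \<in> I \<Longrightarrow> r ^ m \<in> ideal_pow I m"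
proof (induction m)
  case 0 then show ?case by simp
next
  case (Suc m) then show ?case using prod_in[of r I "r^m" m] by simp
qed

lemma canc:
  assumes x: "nonzerodivisor x" and J: "is_ideal J" and g: "elem_mult x J = ideal_generated {u, v}"
  shows "two_generated J"
proof -
  have "u \<in> elem_mult x J" "v \<in> elem_mult x J" using g gen_sub[of "{u,v}"] by auto
  then obtain u' v' where u': "u' \<in> J" "u = x * u'" and v': "v' \<in> J" "v = x * v'"
    unfolding elem_mult_def by auto
  have "J = ideal_generated {u', v'}"
  proof
    show "ideal_generated {u', v'} \<subseteq> J" using J u' v' by (intro gen_least) auto
    show "J \<subseteq> ideal_generated {u', v'}"
    proof
      fix y assume "y \<in> J"
      then have "x * y \<in> ideal_generated {u, v}" unfolding g[symmetric] elem_mult_def by auto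
      then obtain a b where "x * y = a * u + b * v" unfolding gen2 by auto
      then have "x * (y - (a * u' + b * v')) = 0" using u' v' by (simp add: algebra_simps)
      then have "y = a * u' + b * v'" using x unfolding nonzerodivisor_def by auto
      then show "y \<in> ideal_generated {u', v'}" unfolding gen2 by blast
    qed
  qed
  then show ?thesis unfolding two_generated_def by blast
qed

lemma down:
  fixes I :: "'a::comm_ring_1 set"
  assumes loc: "local_ring TYPE('a)" and I: "is_ideal I" and r: "r \<in> I" "nonzerodivisor r"
  shows "two_generated (ideal_pow I (Suc (Suc k))) \<Longrightarrow> two_generated (ideal_pow I (Suc (Suc 0)))"
proof (induction k)
  case 0
  then show ?case by simp
next
  case (Suc k)
  obtain u v where g: "ideal_pow I (Suc (Suc (Suc k))) = ideal_generated {u,v}"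
    using Suc.prems unfolding two_generated_def by blast
  have rin: "r ^ Suc (Suc (Suc k)) \<in> ideal_pow I (Suc (Suc (Suc k)))" using pow_mem r by blast
  have nz: "nonzerodivisor (r ^ Suc (Suc (Suc k)))" using nzd_pow r by blast
  then have "ideal_pow I (Suc (Suc (Suc k))) \<noteq> {0}" using rin nzd_ne0 by fastforce
  then obtain x where x: "x \<in> I" and e: "ideal_pow I (Suc (Suc (Suc k))) = elem_mult x (ideal_pow I (Suc (Suc k)))"
    using Lmain[OF loc I g] by blast
  obtain y where "r ^ Suc (Suc (Suc k)) = x * y" using rin e unfolding elem_mult_def by auto
  then have "nonzerodivisor x" using nz nzd_factor by metis
  moreover have "elem_mult x (ideal_pow I (Suc (Suc k))) = ideal_generated {u,v}" using e g by simp
  ultimately have "two_generated (ideal_pow I (Suc (Suc k)))"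
    by (rule canc[OF _ pow_ideal])
  then show ?case by (rule Suc.IH)
qed

lemma emult_gen2: "elem_mult a (ideal_generated {x, y}) = ideal_generated {a*x, a*y}"
proof (intro set_eqI iffI)
  fix z assume "z \<in> elem_mult a (ideal_generated {x, y})"
  then obtain p q where "z = a * (p * x + q * y)" unfolding elem_mult_def gen2 by auto
  then have "z = p * (a*x) + q * (a*y)" by (simp add: algebra_simps)
  then show "z \<in> ideal_generated {a*x, a*y}" unfolding gen2 by blast
next
  fix z assume "z \<in> ideal_generated {a*x, a*y}"
  then obtain p q where "z = p * (a*x) + q * (a*y)" unfolding gen2 by auto
  then have "z = a * (p * x + q * y)" by (simp add: algebra_simps)
  then show "z \<in> elem_mult a (ideal_generated {x, y})" unfolding elem_mult_def gen2 by blast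
qed

theorem proposition5p1:
  fixes I :: "'a::comm_ring_1 set"
  assumes "local_ring TYPE('a)"
    and "regular_ideal I"
  shows "(\<exists>n::nat. n > 1 \<and> two_generated (ideal_pow I n)) \<longleftrightarrow>
         (two_generated I \<and> (\<exists>a\<in>I. ideal_pow I 2 = elem_mult a I))"
proof
  have I: "is_ideal I" using assms(2) unfolding regular_ideal_def by auto
  obtain r where r: "r \<in> I" "nonzerodivisor r" using assms(2) unfolding regular_ideal_def by auto
  {
    assume "\<exists>n::nat. n > 1 \<and> two_generated (ideal_pow I n)"
    then obtain n where n: "n > 1" "two_generated (ideal_pow I n)" by blast
    define k where "k = n - 2"
    have "n = Suc (Suc k)" using n(1) unfolding k_def by simp
    then have t2: "two_generated (ideal_pow I (Suc (Suc 0)))" using down[OF assms(1) I r] n by blast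
    then obtain u v where g: "ideal_pow I (Suc (Suc 0)) = ideal_generated {u,v}"
      unfolding two_generated_def by blast
    have rin: "r ^ Suc (Suc 0) \<in> ideal_pow I (Suc (Suc 0))" using pow_mem r by blast
    have nz: "nonzerodivisor (r ^ Suc (Suc 0))" using nzd_pow r by blast
    then have "ideal_pow I (Suc (Suc 0)) \<noteq> {0}" using rin nzd_ne0 by fastforce
    then obtain x where x: "x \<in> I" and e: "ideal_pow I (Suc (Suc 0)) = elem_mult x (ideal_pow I (Suc 0))"
      using Lmain[OF assms(1) I g] by blast
    have e1: "ideal_pow I (Suc (Suc 0)) = elem_mult x I" using e pow1[OF I] by simp
    obtain y where "r ^ Suc (Suc 0) = x * y" using rin e1 unfolding elem_mult_def by auto
    then have "nonzerodivisor x" using nz nzd_factor by metis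
    moreover have "elem_mult x I = ideal_generated {u,v}" using e1 g by simp
    ultimately have "two_generated I" by (rule canc[OF _ I])
    moreover have "ideal_pow I 2 = elem_mult x I" using e1 by (simp add: numeral_2_eq_2)
    ultimately show "two_generated I \<and> (\<exists>a\<in>I. ideal_pow I 2 = elem_mult a I)" using x by blast
  }
  {
    assume "two_generated I \<and> (\<exists>a\<in>I. ideal_pow I 2 = elem_mult a I)"
    then obtain x y a where g: "I = ideal_generated {x,y}" and a: "ideal_pow I 2 = elem_mult a I"
      unfolding two_generated_def by blast
    have "ideal_pow I 2 = ideal_generated {a*x, a*y}" using a g emult_gen2 by metis
    then have "two_generated (ideal_pow I 2)" unfolding two_generated_def by blast
    then show "\<exists>n::nat. n > 1 \<and> two_generated (ideal_pow I n)" by (intro exI[of _ 2]) simp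
  }
qed

end
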